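(* Let $y:[0,h]\to\mathbb{R}$ solve $y'=f(y)$, $y(0)=y_0$, with $f$ Lipschitz continuous with constant $L$, and assume $f\circ y\in C^M([0,h])$. Given any previous iterate $\eta^{[p]}$, define the explicit SDC iterate by $\eta_0^{[p+1]}=\eta_0$ and, for $n=1,\dots,N$, $$\eta_n^{[p+1]}=\eta_{n-1}^{[p+1]}+h_n\big[f(\eta_{n-1}^{[p+1]})-f(\eta_{n-1}^{[p]})\big]+h\sum_{m=1}^M w_{n,m}f(\eta_m^{[p]}).$$ Then for each $n=1,\dots,N$, $$|e_n^{[p+1]}|\le e^{NhL}|e_0|+C_1h\|\mathbf e^{[p]}\|+C_2h^{M+1},$$ where $C_1,C_2$ are constants depending only on $f$, the exact solution $y$, and the selection of quadrature points.
   Context: Quadrature nodes $0\le\xi_1<\dots<\xi_M\le1$ partition $[0,1]$ into $N$ subintervals, where $N=M-1$ if both endpoints $0,1$ are nodes, $N=M$ if exactly one is, and $N=M+1$ if neither is. The right endpoints are $\xi^R_0=0$, $\xi^R_N=1$, and for the interior ones $\xi^R_n=\xi_{n+1}$ if the left endpoint $0$ is a node, $\xi^R_n=\xi_n$ otherwise. $\ell_m$ is the Lagrange basis polynomial of degree $\le M-1$ with $\ell_m(\xi_k)=\delta_{mk}$, and $w_{n,m}=\int_{\xi^R_{n-1}}^{\xi^R_n}\ell_m(x)\,dx$. For step size $h>0$, $t_n=\xi^R_nh$, $h_n=(\xi^R_n-\xi^R_{n-1})h$. The iterate $\eta^{[p]}$ consists of approximations $\eta^{[p]}_n\approx y(t_n)$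 and values $\eta^{[p]}_m\approx y(\xi_mh)$ at the quadrature nodes used in the quadrature sum. $\eta_0$ approximates $y_0$, $e_0=\eta_0-y_0$, $e^{[p+1]}_n=\eta^{[p+1]}_n-y(t_n)$, $\mathbf e^{[p]}=(\eta^{[p]}_m-y(\xi_mh))_{m=1}^M$, $\|\mathbf e\|=\max_m|e_m|$. *)

theory Defs
  imports "HOL-Analysis.Analysis"
begin

text \<open>Quadrature nodes are given as xi :: nat => real, indexed 1..M.\<close>

definition num_sub :: "(nat \<Rightarrow> real) \<Rightarrow> nat \<Rightarrow> nat" where
  "num_sub xi M =
     (if xi 1 = 0 \<and> xi M = 1 then M - 1
      else if xi 1 = 0 \<or> xi M = 1 then M else M + 1)"

definition xiR :: "(nat \<Rightarrow> real) \<Rightarrow> nat \<Rightarrow> nat \<Rightarrow> real" where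
  "xiR xi M n =
     (if n = 0 then 0
      else if n = num_sub xi M then 1
      else if xi 1 = 0 then xi (n + 1) else xi n)"

text \<open>Index of the quadrature node equal to the interior right endpoint xiR n.\<close>
definition xiR_idx :: "(nat \<Rightarrow> real) \<Rightarrow> nat \<Rightarrow> nat" where
  "xiR_idx xi n = (if xi 1 = 0 then n + 1 else n)"

definition lagrange_basis :: "(nat \<Rightarrow> real) \<Rightarrow> nat \<Rightarrow> nat \<Rightarrow> real \<Rightarrow> real" where
  "lagrange_basis xi M m x = (\<Prod>k\<in>{1..M} - {m}. (x - xi k) / (xi m - xi k))"

definition quad_w :: "(nat \<Rightarrow> real) \<Rightarrow> nat \<Rightarrow> nat \<Rightarrow> nat \<Rightarrow> real" where
  "quad_w xi M n m = integral {xiR xi M (n - 1) .. xiR xi M n} (lagrange_basis xi M m)"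

definition prev_grid :: "(nat \<Rightarrow> real) \<Rightarrow> real \<Rightarrow> (nat \<Rightarrow> real) \<Rightarrow> nat \<Rightarrow> real" where
  "prev_grid xi eta0 P n = (if n = 0 then eta0 else P (xiR_idx xi n))"

text \<open>Explicit SDC sweep: P m is the previous iterate at node xi m * h (m = 1..M).\<close>
fun sdc :: "(real \<Rightarrow> real) \<Rightarrow> (nat \<Rightarrow> real) \<Rightarrow> nat \<Rightarrow> real \<Rightarrow> real \<Rightarrow> (nat \<Rightarrow> real) \<Rightarrow> nat \<Rightarrow> real" where
  "sdc f xi M h eta0 P 0 = eta0"
| "sdc f xi M h eta0 P (Suc n) =
     sdc f xi M h eta0 P n
     + (xiR xi M (Suc n) - xiR xi M n) * h * (f (sdc f xi M h eta0 P n) - f (prev_grid xi eta0 P n))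
     + h * (\<Sum>m = 1..M. quad_w xi M (Suc n) m * f (P m))"

definition C_k_on :: "nat \<Rightarrow> real set \<Rightarrow> (real \<Rightarrow> real) \<Rightarrow> bool" where
  "C_k_on k S g \<longleftrightarrow> (\<exists>D :: nat \<Rightarrow> real \<Rightarrow> real.
      (\<forall>t\<in>S. D 0 t = g t) \<and>
      (\<forall>j<k. \<forall>t\<in>S. (D j has_real_derivative D (Suc j) t) (at t within S)) \<and>
      continuous_on S (D k))"

end

theory Submission
  imports Defs "HOL-Computational_Algebra.Polynomial"
begin
lemma taylor_rem:
  fixes g :: "real \<Rightarrow> real"
  assumes C: "C_k_on M {0..H} g" and M: "M \<ge> 1"
  shows "\<exists>c K. K \<ge> 0 \<and> (\<forall>s\<in>{0..H}. \<bar>g s - (\<Sum>i<M. c i * s ^ i)\<bar> \<le> K * s ^ M)"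
proof -
  obtain D where D0: "\<forall>t\<in>{0..H}. D 0 t = g t"
    and DD: "\<forall>j<M. \<forall>t\<in>{0..H}. (D j has_real_derivative D (Suc j) t) (at t within {0..H})"
    and DC: "continuous_on {0..H} (D M)"
    using C unfolding C_k_on_def by blast
  have "compact (D M ` {0..H})" by (rule compact_continuous_image[OF DC]) simp
  then obtain K0 where K0: "\<forall>x\<in>D M ` {0..H}. norm x \<le> K0"
    using compact_imp_bounded bounded_iff by metis
  define K where "K = max K0 0"
  have KD: "\<bar>D M t\<bar> \<le> K" if "t \<in> {0..H}" for t using K0 that unfolding K_def by force
  have main: "\<bar>g s - (\<Sum>i<M. D i 0 / fact i * s ^ i)\<bar> \<le> K * s ^ M" if s: "s \<in> {0..H}" for s
  proof -
    have sub: "{0..s} \<subseteq> {0..H}" using s by auto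
    have der: "(D m has_vector_derivative D (Suc m) t) (at t within {0..s})"
      if "m < M" "0 \<le> t" "t \<le> s" for m t
    proof -
      have "(D m has_real_derivative D (Suc m) t) (at t within {0..H})"
        using DD that s by auto
      then have "(D m has_real_derivative D (Suc m) t) (at t within {0..s})"
        by (rule DERIV_subset) (rule sub)
      then show ?thesis by (simp add: has_real_derivative_iff_has_vector_derivative)
    qed
    define i where "i = (\<lambda>x. ((s - x) ^ (M - 1) / fact (M - 1)) *\<^sub>R D M x)"
    have T: "D 0 s = (\<Sum>i<M. ((s-0) ^ i / fact i) *\<^sub>R D i 0) + integral {0..s} i"
      unfolding i_def
      by (rule Taylor_integral[of M D "D 0" 0 s]) (use M s der in auto)
    have ci: "continuous_on {0..s} i"
      unfolding i_def
      by (intro continuous_intros continuous_on_subset[OF DC sub]) auto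
    have bnd: "norm (i t) \<le> s ^ (M - 1) * K" if t: "t \<in> {0..s}" for t
    proof -
      have "\<bar>(s - t) ^ (M - 1) / fact (M - 1)\<bar> \<le> s ^ (M - 1)"
      proof -
        have "(s - t) ^ (M - 1) / fact (M - 1) \<le> (s - t) ^ (M - 1)"
          using frac_le[of "(s-t)^(M-1)" "(s-t)^(M-1)" 1 "fact (M-1)"] t by (simp add: fact_ge_1)
        also have "\<dots> \<le> s ^ (M - 1)" using t by (intro power_mono) auto
        finally show ?thesis using t by simp
      qed
      moreover have "\<bar>D M t\<bar> \<le> K" using KD t sub by auto
      ultimately have "\<bar>(s - t) ^ (M - 1) / fact (M - 1)\<bar> * \<bar>D M t\<bar> \<le> s ^ (M - 1) * K"
        by (intro mult_mono) (use t in auto)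
      then show ?thesis unfolding i_def by (simp add: abs_mult)
    qed
    have "norm (integral {0..s} i) \<le> s ^ (M - 1) * K * (s - 0)"
      by (rule integral_bound) (use s ci bnd in auto)
    also have "\<dots> = K * s ^ M" using M by (cases M) auto
    finally have "\<bar>integral {0..s} i\<bar> \<le> K * s ^ M" by simp
    moreover have "g s = D 0 s" using D0 s by auto
    moreover have "(\<Sum>i<M. ((s-0) ^ i / fact i) *\<^sub>R D i 0) = (\<Sum>i<M. D i 0 / fact i * s ^ i)"
      by (simp add: mult.commute)
    ultimately show ?thesis using T by simp
  qed
  show ?thesis
    by (rule exI[of _ "\<lambda>i. D i 0 / fact i"], rule exI[of _ K]) (use main K_def in auto)
qed

definition Xn :: "(nat \<Rightarrow> real) \<Rightarrow> nat \<Rightarrow> nat \<Rightarrow> real" where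
  "Xn xi M k = (if k = 0 then 0 else if k \<le> M then xi k else 1)"

definition sh :: "(nat \<Rightarrow> real) \<Rightarrow> nat" where
  "sh xi = (if xi 1 = 0 then 1 else 0)"

lemma xiR_X:
  assumes M: "M \<ge> 1"
    and nodes_mono: "\<And>i j. 1 \<le> i \<Longrightarrow> i < j \<Longrightarrow> j \<le> M \<Longrightarrow> xi i < xi j"
    and n: "n \<le> num_sub xi M"
  shows "xiR xi M n = Xn xi M (n + sh xi)" and "num_sub xi M + sh xi \<le> M + 1"
    and "num_sub xi M \<ge> 1"
proof -
  have A: "M \<ge> 2" if "xi 1 = 0" "xi M = 1"
  proof (rule ccontr)
    assume "\<not> M \<ge> 2" then have "M = 1" using M by auto
    then show False using that by simp
  qed
  show "num_sub xi M + sh xi \<le> M + 1" "num_sub xi M \<ge> 1"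
    using A M unfolding num_sub_def sh_def by auto
  show "xiR xi M n = Xn xi M (n + sh xi)"
  proof (cases "xi 1 = 0")
    case True
    show ?thesis
    proof (cases "xi M = 1")
      case True2: True
      then have "num_sub xi M = M - 1" using True by (simp add: num_sub_def)
      then show ?thesis using n True True2 A M
        unfolding xiR_def Xn_def sh_def by auto
    next
      case False
      then have "num_sub xi M = M" using True by (simp add: num_sub_def)
      then show ?thesis using n True False M
        unfolding xiR_def Xn_def sh_def by auto
    qed
  next
    case False
    show ?thesis
    proof (cases "xi M = 1")
      case True2: True
      then have "num_sub xi M = M" using False by (simp add: num_sub_def)
      then show ?thesis using n False True2 M
        unfolding xiR_def Xn_def sh_def by auto
    next
      case False2: False
      then have "num_sub xi M = M + 1" using False by (simp add: num_sub_def)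
      then show ?thesis using n False False2 M
        unfolding xiR_def Xn_def sh_def by auto
    qed
  qed
qed

lemma Xn_mono:
  assumes M: "M \<ge> 1"
    and nodes_mono: "\<And>i j. 1 \<le> i \<Longrightarrow> i < j \<Longrightarrow> j \<le> M \<Longrightarrow> xi i < xi j"
    and nodes_lo: "0 \<le> xi 1" and nodes_hi: "xi M \<le> 1"
  shows "k \<le> l \<Longrightarrow> Xn xi M k \<le> Xn xi M l" and "0 \<le> Xn xi M k" and "Xn xi M k \<le> 1"
proof -
  have wm: "xi i \<le> xi j" if "1 \<le> i" "i \<le> j" "j \<le> M" for i j
    using nodes_mono[of i j] that by (cases "i = j") auto
  show "0 \<le> Xn xi M k"
    unfolding Xn_def using wm[of 1 k] nodes_lo by auto
  show "Xn xi M k \<le> 1"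
    unfolding Xn_def using wm[of k M] nodes_hi by auto
  show "k \<le> l \<Longrightarrow> Xn xi M k \<le> Xn xi M l"
    unfolding Xn_def using wm[of 1 l] wm[of k l] wm[of k M] nodes_lo nodes_hi by auto
qed

lemma lagrange_exact:
  fixes xi :: "nat \<Rightarrow> real" and p :: "real poly"
  assumes inj: "inj_on xi {1..M}" and deg: "degree p < M"
  shows "(\<Sum>m=1..M. poly p (xi m) * lagrange_basis xi M m x) = poly p x"
proof -
  define Lp where "Lp m = (\<Prod>k\<in>{1..M}-{m}. smult (1/(xi m - xi k)) [:-xi k,1:])" for m
  have pL: "poly (Lp m) z = lagrange_basis xi M m z" for m z
    unfolding Lp_def lagrange_basis_def poly_prod
    by (intro prod.cong) (auto simp: diff_divide_distrib)
  define q where "q = (\<Sum>m\<in>{1..M}. smult (poly p (xi m)) (Lp m))"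
  have pq: "poly q z = (\<Sum>m=1..M. poly p (xi m) * lagrange_basis xi M m z)" for z
    unfolding q_def poly_sum by (simp add: pL)
  have dL: "degree (Lp m) \<le> M - 1" if "m \<in> {1..M}" for m
  proof -
    have "degree (Lp m) \<le> sum (degree \<circ> (\<lambda>k. smult (1/(xi m - xi k)) [:-xi k,1:])) ({1..M}-{m})"
      unfolding Lp_def by (rule degree_prod_sum_le) auto
    also have "\<dots> \<le> sum (\<lambda>_. 1) ({1..M}-{m})"
      by (intro sum_mono) (auto simp: degree_smult_le)
    also have "\<dots> = M - 1" using that by simp
    finally show ?thesis .
  qed
  have dq: "degree q \<le> M - 1"
    unfolding q_def
  proof (rule degree_sum_le)
    fix m assume "m \<in> {1..M}"
    show "degree (smult (poly p (xi m)) (Lp m)) \<le> M - 1"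
      using degree_smult_le[of "poly p (xi m)" "Lp m"] dL[OF \<open>m \<in> {1..M}\<close>] by linarith
  qed simp
  have delta: "lagrange_basis xi M m (xi k) = (if m = k then 1 else 0)"
    if "m \<in> {1..M}" "k \<in> {1..M}" for m k
  proof (cases "m = k")
    case True
    have "lagrange_basis xi M m (xi k) = (\<Prod>j\<in>{1..M} - {m}. 1)"
      unfolding lagrange_basis_def
    proof (intro prod.cong refl)
      fix j assume j: "j \<in> {1..M} - {m}"
      then have "xi m \<noteq> xi j" using inj that(1) by (metis DiffE inj_on_contraD singletonI)
      then show "(xi k - xi j) / (xi m - xi j) = 1" using True by simp
    qed
    then show ?thesis using True by simp
  next
    case False
    have "lagrange_basis xi M m (xi k) = 0"
      unfolding lagrange_basis_def using False that
      by (intro prod_zero) auto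
    then show ?thesis using False by simp
  qed
  have "q = p"
  proof (rule poly_eqI_degree[where A="xi ` {1..M}"])
    fix z assume "z \<in> xi ` {1..M}"
    then obtain k where k: "k \<in> {1..M}" "z = xi k" by auto
    have "poly q z = (\<Sum>m\<in>{1..M}. if m = k then poly p (xi m) else 0)"
      unfolding pq k(2) using k(1) by (intro sum.cong) (auto simp: delta)
    also have "\<dots> = poly p z" using k by simp
    finally show "poly q z = poly p z" .
  next
    have "card (xi ` {1..M}) = M" using inj by (simp add: card_image)
    then show "degree q < card (xi ` {1..M})" "degree p < card (xi ` {1..M})"
      using dq deg by auto
  qed
  then have "poly q x = poly p x" by (simp only:)
  then show ?thesis using pq[of x] by linarith
qed


lemma lagrange_cont: "continuous_on S (lagrange_basis xi M m)"
  unfolding lagrange_basis_def divide_inverse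
  by (intro continuous_on_prod continuous_on_mult continuous_on_diff continuous_on_id continuous_on_const)

lemma quad_err:
  fixes g y :: "real \<Rightarrow> real" and xi :: "nat \<Rightarrow> real"
  assumes M: "M \<ge> 1"
    and inj: "inj_on xi {1..M}"
    and xr: "\<And>m. m \<in> {1..M} \<Longrightarrow> 0 \<le> xi m \<and> xi m \<le> 1"
    and ode: "\<And>t. t \<in> {0..H} \<Longrightarrow> (y has_real_derivative g t) (at t within {0..H})"
    and T: "\<And>s. s \<in> {0..H} \<Longrightarrow> \<bar>g s - (\<Sum>i<M. c i * s ^ i)\<bar> \<le> K * s ^ M" and K: "K \<ge> 0"
    and B: "\<And>x. x \<in> {0..1} \<Longrightarrow> (\<Sum>m=1..M. \<bar>lagrange_basis xi M m x\<bar>) \<le> B"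
    and ab: "0 \<le> a" "a \<le> b" "b \<le> 1" and h: "0 < h" "h \<le> H"
  shows "\<bar>y (b*h) - y (a*h) - h * (\<Sum>m=1..M. integral {a..b} (lagrange_basis xi M m) * g (xi m * h))\<bar>
          \<le> K * (1 + B) * h ^ (M + 1)"
proof -
  define I where "I = y (b*h) - y (a*h)"
  have "((\<lambda>x. g (x*h) * h) has_integral ((\<lambda>x. y (x*h)) b - (\<lambda>x. y (x*h)) a)) {a..b}"
  proof (rule fundamental_theorem_of_calculus[OF ab(2)])
    fix x assume x: "x \<in> {a..b}"
    have img: "(\<lambda>x. x*h) ` {a..b} \<subseteq> {0..H}"
    proof
      fix u assume "u \<in> (\<lambda>x. x*h) ` {a..b}"
      then obtain vv where vv: "vv \<in> {a..b}" and uv: "u = vv * h" by blast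
      have "vv * h \<le> 1 * h" using vv ab h by (intro mult_right_mono) auto
      moreover have "0 \<le> vv * h" using vv ab h by auto
      ultimately show "u \<in> {0..H}" unfolding uv atLeastAtMost_iff using h by linarith
    qed
    have "x*h \<in> {0..H}" using img x by (meson image_eqI subsetD)
    then have "(y has_real_derivative g (x*h)) (at (x*h) within (\<lambda>x. x*h) ` {a..b})"
      using ode DERIV_subset img by blast
    moreover have "((\<lambda>x. x*h) has_real_derivative h) (at x within {a..b})"
      by (auto intro!: derivative_eq_intros)
    ultimately have "(y \<circ> (\<lambda>x. x*h) has_real_derivative g (x*h) * h) (at x within {a..b})"
      by (rule DERIV_image_chain)
    then show "((\<lambda>x. y (x*h)) has_vector_derivative g (x*h) * h) (at x within {a..b})"
      by (simp add: has_real_derivative_iff_has_vector_derivative o_def)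
  qed
  then have "((\<lambda>x. g (x*h) * h) has_integral I) {a..b}" by (simp add: I_def)
  then have "((\<lambda>x. g (x*h) * h * (1/h)) has_integral I * (1/h)) {a..b}"
    by (rule has_integral_mult_left)
  moreover have "(\<lambda>x. g (x*h) * h * (1/h)) = (\<lambda>x. g (x*h))" using h by auto
  ultimately have hg: "((\<lambda>x. g (x*h)) has_integral I / h) {a..b}" by simp
  define w where "w m = integral {a..b} (lagrange_basis xi M m)" for m
  have hl: "(lagrange_basis xi M m has_integral w m) {a..b}" for m
    unfolding w_def by (intro integrable_integral integrable_continuous_real lagrange_cont)
  have hs: "((\<lambda>x. \<Sum>m=1..M. lagrange_basis xi M m x * g (xi m * h)) has_integral
      (\<Sum>m=1..M. w m * g (xi m * h))) {a..b}"
    by (intro has_integral_sum has_integral_mult_left hl) auto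
  define phi where "phi x = g (x*h) - (\<Sum>m=1..M. lagrange_basis xi M m x * g (xi m * h))" for x
  have hp: "(phi has_integral (I / h - (\<Sum>m=1..M. w m * g (xi m * h)))) {a..b}"
    unfolding phi_def by (rule has_integral_diff[OF hg hs])
  define Tf where "Tf s = (\<Sum>i<M. c i * s ^ i)" for s
  define p where "p = (\<Sum>i<M. monom (c i * h ^ i) i)"
  have pp: "poly p z = Tf (z*h)" for z
    unfolding p_def Tf_def poly_sum poly_monom by (simp add: power_mult_distrib mult_ac)
  have dp: "degree p < M"
  proof -
    have "degree p \<le> M - 1" unfolding p_def
    proof (rule degree_sum_le)
      fix i assume "i \<in> {..<M}"
      then show "degree (monom (c i * h ^ i) i) \<le> M - 1"
        using degree_monom_le[of "c i * h ^ i" i] by auto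
    qed simp
    then show ?thesis using M by linarith
  qed
  have ex: "(\<Sum>m=1..M. Tf (xi m * h) * lagrange_basis xi M m x) = Tf (x*h)" for x
    using lagrange_exact[OF inj dp, of x] by (simp add: pp)
  have Rb: "\<bar>g s - Tf s\<bar> \<le> K * h ^ M" if "0 \<le> s" "s \<le> h" for s
  proof -
    have "\<bar>g s - Tf s\<bar> \<le> K * s ^ M" unfolding Tf_def using T that h by auto
    also have "\<dots> \<le> K * h ^ M" using that K by (intro mult_left_mono power_mono) auto
    finally show ?thesis .
  qed
  have B0: "0 \<le> B" using B[of 0] by (smt (verit) atLeastAtMost_iff sum_nonneg abs_ge_zero)
  have pb: "norm (phi x) \<le> K * h ^ M * (1 + B)" if x: "x \<in> {a..b}" for x
  proof -
    have x01: "x \<in> {0..1}" using x ab by auto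
    have eq: "phi x = (g (x*h) - Tf (x*h)) -
        (\<Sum>m=1..M. lagrange_basis xi M m x * (g (xi m * h) - Tf (xi m * h)))"
      unfolding phi_def ex[of x, symmetric]
      by (simp add: algebra_simps sum_subtractf)
    have xh: "0 \<le> x*h" "x*h \<le> h" using x01 h mult_left_le_one_le[of h x] by auto
    have "\<bar>\<Sum>m=1..M. lagrange_basis xi M m x * (g (xi m * h) - Tf (xi m * h))\<bar>
        \<le> (\<Sum>m=1..M. \<bar>lagrange_basis xi M m x\<bar> * (K * h ^ M))"
    proof -
      have "\<bar>\<Sum>m=1..M. lagrange_basis xi M m x * (g (xi m * h) - Tf (xi m * h))\<bar>
          \<le> (\<Sum>m=1..M. \<bar>lagrange_basis xi M m x * (g (xi m * h) - Tf (xi m * h))\<bar>)"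
        by (rule sum_abs)
      also have "\<dots> \<le> (\<Sum>m=1..M. \<bar>lagrange_basis xi M m x\<bar> * (K * h ^ M))"
      proof (rule sum_mono)
        fix m assume m: "m \<in> {1..M}"
        have "0 \<le> xi m * h" "xi m * h \<le> h" using xr[OF m] h mult_left_le_one_le[of h "xi m"]
          by (auto simp: mult.commute)
        then have "\<bar>g (xi m * h) - Tf (xi m * h)\<bar> \<le> K * h ^ M" by (rule Rb)
        then show "\<bar>lagrange_basis xi M m x * (g (xi m * h) - Tf (xi m * h))\<bar>
            \<le> \<bar>lagrange_basis xi M m x\<bar> * (K * h ^ M)"
          by (simp add: abs_mult mult_left_mono)
      qed
      finally show ?thesis .
    qed
    also have "\<dots> = (\<Sum>m=1..M. \<bar>lagrange_basis xi M m x\<bar>) * (K * h ^ M)"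
      by (simp add: sum_distrib_right)
    also have "\<dots> \<le> B * (K * h ^ M)"
      using B[OF x01] K h by (intro mult_right_mono) auto
    finally have s2: "\<bar>\<Sum>m=1..M. lagrange_basis xi M m x * (g (xi m * h) - Tf (xi m * h))\<bar>
        \<le> B * (K * h ^ M)" .
    have s1: "\<bar>g (x*h) - Tf (x*h)\<bar> \<le> K * h ^ M" using Rb xh by auto
    show ?thesis unfolding eq real_norm_def using s1 s2 by (simp add: algebra_simps)
  qed
  have "norm (I / h - (\<Sum>m=1..M. w m * g (xi m * h))) \<le> K * h ^ M * (1 + B) * Henstock_Kurzweil_Integration.content {a..b}"
    by (rule has_integral_bound_real[OF _ _ hp, of _ "{}"]) (use pb K B0 h in auto)
  also have "\<dots> \<le> K * h ^ M * (1 + B) * 1"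
    using ab K B0 h by (intro mult_left_mono) (auto simp: content_real)
  finally have bd: "\<bar>I / h - (\<Sum>m=1..M. w m * g (xi m * h))\<bar> \<le> K * h ^ M * (1 + B)" by simp
  have "I - h * (\<Sum>m=1..M. w m * g (xi m * h)) = h * (I / h - (\<Sum>m=1..M. w m * g (xi m * h)))"
    using h by (simp add: algebra_simps)
  then have "\<bar>I - h * (\<Sum>m=1..M. w m * g (xi m * h))\<bar> = h * \<bar>I / h - (\<Sum>m=1..M. w m * g (xi m * h))\<bar>"
    using h by (simp add: abs_mult)
  also have "\<dots> \<le> h * (K * h ^ M * (1 + B))" using bd h by (intro mult_left_mono) auto
  also have "\<dots> = K * (1 + B) * h ^ (M + 1)" by (simp add: algebra_simps)
  finally show ?thesis unfolding I_def w_def .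
qed

theorem corollary3:
  fixes f :: "real \<Rightarrow> real" and L H :: real and y :: "real \<Rightarrow> real"
    and xi :: "nat \<Rightarrow> real" and M :: nat
  assumes lip: "L-lipschitz_on UNIV f"
    and H: "H > 0"
    and ode: "\<And>t. t \<in> {0..H} \<Longrightarrow> (y has_real_derivative f (y t)) (at t within {0..H})"
    and smooth: "C_k_on M {0..H} (\<lambda>t. f (y t))"
    and M: "M \<ge> 1"
    and nodes_mono: "\<And>i j. 1 \<le> i \<Longrightarrow> i < j \<Longrightarrow> j \<le> M \<Longrightarrow> xi i < xi j"
    and nodes_lo: "0 \<le> xi 1" and nodes_hi: "xi M \<le> 1"
  shows "\<exists>C1 C2 :: real. \<forall>h eta0 P n.
           0 < h \<and> h \<le> H \<and> 1 \<le> n \<and> n \<le> num_sub xi M \<longrightarrow>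
           \<bar>sdc f xi M h eta0 P n - y (xiR xi M n * h)\<bar>
             \<le> exp (real (num_sub xi M) * h * L) * \<bar>eta0 - y 0\<bar>
               + C1 * h * (MAX m\<in>{1..M}. \<bar>P m - y (xi m * h)\<bar>)
               + C2 * h ^ (M + 1)"
proof -
  have L0: "0 \<le> L" using lip by (simp add: lipschitz_on_def)
  have lipf: "\<bar>f u - f v\<bar> \<le> L * \<bar>u - v\<bar>" for u v
    using lip by (simp add: lipschitz_on_def dist_real_def)
  define g where "g t = f (y t)" for t
  obtain c K where K: "K \<ge> 0" and TK: "\<And>s. s \<in> {0..H} \<Longrightarrow> \<bar>g s - (\<Sum>i<M. c i * s ^ i)\<bar> \<le> K * s ^ M"
    using taylor_rem[OF smooth M] unfolding g_def by blast
  have inj: "inj_on xi {1..M}"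
  proof (rule inj_onI)
    fix i j assume ij: "i \<in> {1..M}" "j \<in> {1..M}" "xi i = xi j"
    show "i = j"
    proof (rule ccontr)
      assume "i \<noteq> j"
      then have "i < j \<or> j < i" by auto
      then show False using nodes_mono[of i j] nodes_mono[of j i] ij by auto
    qed
  qed
  have XM: "Xn xi M m = xi m" if "m \<in> {1..M}" for m using that unfolding Xn_def by auto
  have xr: "0 \<le> xi m \<and> xi m \<le> 1" if "m \<in> {1..M}" for m
    using Xn_mono(2,3)[OF M nodes_mono nodes_lo nodes_hi, of m] XM[OF that] by auto
  have "compact ((\<lambda>x. \<Sum>m=1..M. \<bar>lagrange_basis xi M m x\<bar>) ` {0..1})"
    by (intro compact_continuous_image continuous_on_sum continuous_on_rabs lagrange_cont) auto
  then obtain B where Bb: "\<forall>z\<in>(\<lambda>x. \<Sum>m=1..M. \<bar>lagrange_basis xi M m x\<bar>) ` {0..1}. norm z \<le> B"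
    using compact_imp_bounded bounded_iff by metis
  have B: "(\<Sum>m=1..M. \<bar>lagrange_basis xi M m x\<bar>) \<le> B" if "x \<in> {0..1}" for x
    using Bb that by force
  have B0: "0 \<le> B" using B[of 0] by (smt (verit) atLeastAtMost_iff sum_nonneg abs_ge_zero)
  define Cq where "Cq = K * (1 + B)"
  have Cq0: "0 \<le> Cq" unfolding Cq_def using K B0 by simp
  define N where "N = num_sub xi M"
  define W where "W = (\<Sum>n\<in>{1..N}. \<Sum>m\<in>{1..M}. \<bar>quad_w xi M n m\<bar>)"
  have W: "(\<Sum>m\<in>{1..M}. \<bar>quad_w xi M n m\<bar>) \<le> W" if "n \<in> {1..N}" for n
    unfolding W_def by (rule member_le_sum[OF that]) (auto intro: sum_nonneg)
  define G where "G = exp (L * H)"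
  have G1: "1 \<le> G" unfolding G_def using L0 H by simp
  define C1 where "C1 = real N * G ^ N * (L + W * L)"
  define C2 where "C2 = real N * G ^ N * Cq"
  show ?thesis
  proof (rule exI[of _ C1], rule exI[of _ C2], intro allI impI)
    fix h eta0 P n
    assume hn: "0 < h \<and> h \<le> H \<and> 1 \<le> n \<and> n \<le> num_sub xi M"
    then have h: "0 < h" "h \<le> H" and n: "1 \<le> n" "n \<le> N" unfolding N_def by auto
    define E where "E = (MAX m\<in>{1..M}. \<bar>P m - y (xi m * h)\<bar>)"
    have Eb: "\<bar>P m - y (xi m * h)\<bar> \<le> E" if "m \<in> {1..M}" for m
      unfolding E_def using that by (intro Max_ge) auto
    have E0: "0 \<le> E" using Eb[of 1] M by force
    define e where "e k = sdc f xi M h eta0 P k - y (xiR xi M k * h)" for k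
    define \<beta> where "\<beta> = h * L * E + h * W * L * E + Cq * h ^ (M + 1)"
    have \<beta>0: "0 \<le> \<beta>" unfolding \<beta>_def using h L0 E0 Cq0 W[of 1] n
      by (intro add_nonneg_nonneg mult_nonneg_nonneg) (auto intro: order.trans[OF sum_nonneg])
    have xr0: "xiR xi M 0 = 0" by (simp add: xiR_def)
    have ab: "0 \<le> xiR xi M k" "xiR xi M k \<le> xiR xi M (Suc k)" "xiR xi M (Suc k) \<le> 1"
      if "k < N" for k
    proof -
      have e1: "xiR xi M k = Xn xi M (k + sh xi)"
        using xiR_X(1)[where M=M and xi=xi and n=k, OF M nodes_mono] that unfolding N_def by auto
      have e2: "xiR xi M (Suc k) = Xn xi M (Suc k + sh xi)"
        using xiR_X(1)[where M=M and xi=xi and n="Suc k", OF M nodes_mono] that unfolding N_def by auto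
      show "0 \<le> xiR xi M k" "xiR xi M k \<le> xiR xi M (Suc k)" "xiR xi M (Suc k) \<le> 1"
        unfolding e1 e2 using Xn_mono[OF M nodes_mono nodes_lo nodes_hi] by auto
    qed
    have step: "\<bar>e (Suc k)\<bar> \<le> (1 + (xiR xi M (Suc k) - xiR xi M k) * h * L) * \<bar>e k\<bar> + \<beta>"
      if k: "k < N" for k
    proof -
      define a where "a = xiR xi M k"
      define b where "b = xiR xi M (Suc k)"
      have a0: "0 \<le> a" "a \<le> b" "b \<le> 1" using ab[OF k] unfolding a_def b_def by auto
      define S where "S = sdc f xi M h eta0 P k"
      define Pk where "Pk = prev_grid xi eta0 P k"
      define w where "w m = integral {a..b} (lagrange_basis xi M m)" for m
      have qw: "quad_w xi M (Suc k) m = w m" for m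
        unfolding quad_w_def w_def a_def b_def by simp
      have sd: "sdc f xi M h eta0 P (Suc k) = S + (b - a) * h * (f S - f Pk) + h * (\<Sum>m=1..M. w m * f (P m))"
        unfolding S_def Pk_def a_def b_def by (simp add: qw)
      define \<tau> where "\<tau> = y (b*h) - y (a*h) - h * (\<Sum>m=1..M. w m * g (xi m * h))"
      have tau: "\<bar>\<tau>\<bar> \<le> Cq * h ^ (M + 1)"
        unfolding \<tau>_def w_def Cq_def
        by (rule quad_err[OF M inj xr _ TK K B a0 h]) (auto simp: g_def ode)
      have split: "(\<Sum>m=1..M. w m * f (P m)) = (\<Sum>m=1..M. w m * (f (P m) - g (xi m * h))) + (\<Sum>m=1..M. w m * g (xi m * h))"
        by (simp add: sum.distrib[symmetric] algebra_simps)
      have ee: "e (Suc k) = e k + (b - a) * h * (f S - f Pk) + h * (\<Sum>m=1..M. w m * (f (P m) - g (xi m * h))) - \<tau>"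
        unfolding e_def sd split \<tau>_def S_def a_def b_def by (simp add: algebra_simps)
      have T1: "\<bar>(b - a) * h * (f S - f Pk)\<bar> \<le> (b - a) * h * L * \<bar>e k\<bar> + h * L * E"
      proof (cases "k = 0")
        case True
        then have "S = Pk" unfolding S_def Pk_def prev_grid_def by simp
        then show ?thesis using a0 h L0 E0 by simp
      next
        case False
        define idx where "idx = k + sh xi"
        have idxM: "idx \<in> {1..M}"
          using False k xiR_X(2)[where M=M and xi=xi and n=0, OF M nodes_mono] unfolding idx_def N_def by auto
        have Pk: "Pk = P idx" unfolding Pk_def prev_grid_def idx_def xiR_idx_def sh_def
          using False by simp
        have ak: "a = xi idx"
          using xiR_X(1)[where M=M and xi=xi and n=k, OF M nodes_mono] k XM[OF idxM] unfolding a_def idx_def N_def by auto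
        have "\<bar>f S - f Pk\<bar> \<le> \<bar>f S - f (y (a*h))\<bar> + \<bar>f (y (a*h)) - f Pk\<bar>" by linarith
        also have "\<dots> \<le> L * \<bar>e k\<bar> + L * E"
        proof (rule add_mono)
          show "\<bar>f S - f (y (a*h))\<bar> \<le> L * \<bar>e k\<bar>" using lipf unfolding e_def S_def a_def by simp
          have "\<bar>f (y (a*h)) - f Pk\<bar> \<le> L * \<bar>y (a*h) - Pk\<bar>" by (rule lipf)
          also have "\<dots> \<le> L * E" using Eb[OF idxM] L0 unfolding Pk ak
            by (intro mult_left_mono) (auto simp: abs_minus_commute)
          finally show "\<bar>f (y (a*h)) - f Pk\<bar> \<le> L * E" .
        qed
        finally have fb: "\<bar>f S - f Pk\<bar> \<le> L * \<bar>e k\<bar> + L * E" .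
        have "\<bar>(b - a) * h * (f S - f Pk)\<bar> = (b - a) * h * \<bar>f S - f Pk\<bar>"
          using a0 h by (simp add: abs_mult)
        also have "\<dots> \<le> (b - a) * h * (L * \<bar>e k\<bar> + L * E)"
          using fb a0 h by (intro mult_left_mono) auto
        also have "\<dots> = (b - a) * h * L * \<bar>e k\<bar> + (b - a) * (h * L * E)" by (simp add: algebra_simps)
        also have "\<dots> \<le> (b - a) * h * L * \<bar>e k\<bar> + 1 * (h * L * E)"
          using a0 h L0 E0 by (intro add_left_mono mult_right_mono) auto
        finally show ?thesis by simp
      qed
      have T2: "\<bar>h * (\<Sum>m=1..M. w m * (f (P m) - g (xi m * h)))\<bar> \<le> h * W * L * E"
      proof -
        have "\<bar>\<Sum>m=1..M. w m * (f (P m) - g (xi m * h))\<bar> \<le> (\<Sum>m=1..M. \<bar>w m * (f (P m) - g (xi m * h))\<bar>)"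
          by (rule sum_abs)
        also have "\<dots> \<le> (\<Sum>m=1..M. \<bar>w m\<bar> * (L * E))"
        proof (rule sum_mono)
          fix m assume m: "m \<in> {1..M}"
          have "\<bar>f (P m) - g (xi m * h)\<bar> \<le> L * \<bar>P m - y (xi m * h)\<bar>" unfolding g_def by (rule lipf)
          also have "\<dots> \<le> L * E" using Eb[OF m] L0 by (intro mult_left_mono) auto
          finally show "\<bar>w m * (f (P m) - g (xi m * h))\<bar> \<le> \<bar>w m\<bar> * (L * E)"
            by (simp add: abs_mult mult_left_mono)
        qed
        also have "\<dots> = (\<Sum>m=1..M. \<bar>w m\<bar>) * (L * E)" by (simp add: sum_distrib_right)
        also have "\<dots> \<le> W * (L * E)"
          using W[of "Suc k"] k L0 E0 by (intro mult_right_mono) (auto simp: qw)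
        finally have "\<bar>\<Sum>m=1..M. w m * (f (P m) - g (xi m * h))\<bar> \<le> W * (L * E)" .
        then show ?thesis using h by (simp add: abs_mult mult_left_mono mult.assoc)
      qed
      have "\<bar>e (Suc k)\<bar> \<le> \<bar>e k\<bar> + \<bar>(b - a) * h * (f S - f Pk)\<bar> + \<bar>h * (\<Sum>m=1..M. w m * (f (P m) - g (xi m * h)))\<bar> + \<bar>\<tau>\<bar>"
        unfolding ee by linarith
      also have "\<dots> \<le> \<bar>e k\<bar> + ((b - a) * h * L * \<bar>e k\<bar> + h * L * E) + h * W * L * E + Cq * h ^ (M + 1)"
        using T1 T2 tau by linarith
      also have "\<dots> = (1 + (b - a) * h * L) * \<bar>e k\<bar> + \<beta>" unfolding \<beta>_def by (simp add: algebra_simps)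
      finally show ?thesis unfolding a_def b_def .
    qed
    have claim: "\<bar>e k\<bar> \<le> exp (L * h * xiR xi M k) * \<bar>e 0\<bar> + real k * G ^ k * \<beta>" if "k \<le> N" for k
      using that
    proof (induction k)
      case 0
      then show ?case by (simp add: xr0)
    next
      case (Suc k)
      then have k: "k < N" by simp
      have IH: "\<bar>e k\<bar> \<le> exp (L * h * xiR xi M k) * \<bar>e 0\<bar> + real k * G ^ k * \<beta>" using Suc k by simp
      define d where "d = (xiR xi M (Suc k) - xiR xi M k) * h * L"
      have d0: "0 \<le> d" unfolding d_def using ab[OF k] h L0 by simp
      have dG: "1 + d \<le> G"
      proof -
        have "d \<le> 1 * H * L" unfolding d_def using ab[OF k] h L0
          by (intro mult_right_mono mult_mono) auto
        then have "exp d \<le> G" unfolding G_def by (simp add: mult.commute)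
        then show ?thesis using exp_ge_add_one_self[of d] by linarith
      qed
      have "\<bar>e (Suc k)\<bar> \<le> (1 + d) * \<bar>e k\<bar> + \<beta>" using step[OF k] unfolding d_def .
      also have "\<dots> \<le> (1 + d) * (exp (L * h * xiR xi M k) * \<bar>e 0\<bar> + real k * G ^ k * \<beta>) + \<beta>"
        using IH d0 by (intro add_right_mono mult_left_mono) auto
      also have "\<dots> = (1 + d) * exp (L * h * xiR xi M k) * \<bar>e 0\<bar> + (1 + d) * (real k * G ^ k * \<beta>) + \<beta>"
        by (simp add: algebra_simps)
      also have "\<dots> \<le> exp d * exp (L * h * xiR xi M k) * \<bar>e 0\<bar> + G * (real k * G ^ k * \<beta>) + G ^ Suc k * \<beta>"
      proof (intro add_mono mult_right_mono)
        show "1 + d \<le> exp d" by simp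
        show "1 + d \<le> G" by (rule dG)
        show "\<beta> \<le> G ^ Suc k * \<beta>" 
        proof -
          have "1 \<le> G ^ Suc k" using G1 by (rule one_le_power)
          then show ?thesis using \<beta>0 mult_right_mono[of 1 "G ^ Suc k" \<beta>] by simp
        qed
      qed (use \<beta>0 G1 in auto)
      finally have fin: "\<bar>e (Suc k)\<bar> \<le> exp d * exp (L * h * xiR xi M k) * \<bar>e 0\<bar> + G * (real k * G ^ k * \<beta>) + G ^ Suc k * \<beta>" .
      have q1: "exp d * exp (L * h * xiR xi M k) = exp (L * h * xiR xi M (Suc k))"
        unfolding d_def by (simp add: exp_add[symmetric] algebra_simps)
      have q2: "G * (real k * G ^ k * \<beta>) + G ^ Suc k * \<beta> = real (Suc k) * G ^ Suc k * \<beta>"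
        by (simp add: algebra_simps)
      show ?case using fin unfolding q1 by (simp only: add.assoc q2)
    qed
    have c1: "\<bar>e n\<bar> \<le> exp (L * h * xiR xi M n) * \<bar>e 0\<bar> + real n * G ^ n * \<beta>" by (rule claim[OF n(2)])
    have xn1: "xiR xi M n \<le> 1" using ab[of "n - 1"] n by auto
    have "exp (L * h * xiR xi M n) \<le> exp (real N * h * L)"
    proof -
      have "L * h * xiR xi M n \<le> L * h * 1" using xn1 L0 h by (intro mult_left_mono) auto
      also have "\<dots> \<le> L * h * real N" using n L0 h by (intro mult_left_mono) auto
      finally show ?thesis by (simp add: mult_ac)
    qed
    then have p1: "exp (L * h * xiR xi M n) * \<bar>e 0\<bar> \<le> exp (real N * h * L) * \<bar>e 0\<bar>"
      by (intro mult_right_mono) auto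
    have p2: "real n * G ^ n * \<beta> \<le> real N * G ^ N * \<beta>"
      using n G1 \<beta>0 by (intro mult_right_mono mult_mono power_increasing) auto
    have p3: "real N * G ^ N * \<beta> = C1 * h * E + C2 * h ^ (M + 1)"
      unfolding C1_def C2_def \<beta>_def by (simp add: algebra_simps)
    have e0: "e 0 = eta0 - y 0" unfolding e_def by (simp add: xr0)
    show "\<bar>sdc f xi M h eta0 P n - y (xiR xi M n * h)\<bar>
             \<le> exp (real (num_sub xi M) * h * L) * \<bar>eta0 - y 0\<bar>
               + C1 * h * (MAX m\<in>{1..M}. \<bar>P m - y (xi m * h)\<bar>)
               + C2 * h ^ (M + 1)"
      using c1 p1 p2 p3 unfolding e_def[of n, symmetric] E_def[symmetric] N_def[symmetric] e0
      by linarith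
  qed
qed

end
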